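(* Assume the demand is i.i.d. with pmf $P_X$. Let $\theta^*$ be a minimizer of $\theta\mapsto I(S-X;X)$ over $\mathcal P_S$ ($X\sim P_X$, $S\sim\theta$ independent), $J^*$ the minimum value, $\xi^*(w)=\sum_{(x,s):s-x=w}P_X(x)\theta^*(s)$, and $b^*(y\mid w)=P_X(y)\theta^*(y+w)/\xi^*(w)$ for $y\in\mathcal X\cap\mathcal Y_\circ(w)$ and $0$ otherwise. Then (1) $\xi^*$ and $\theta^*$ are related by $\xi^*(w)=\sum_{(x,s):s-x=w}P_X(x)\theta^*(s)$; (2) $b^*$ is a structured policy with respect to $(\theta^*,\xi^* )$; (3) if $S_1\sim\theta^*$ and the constant-distribution policy $Y_t\sim b^*(\cdot\mid S_t-X_t)$ is used, the (infinite-horizon) leakage rate equals $J^*$. Thus $J^*$ is achievable.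
   Context: $\mathcal X=\{0,\dots,m_x\}$, $\mathcal Y=\{0,\dots,m_y\}$, $\mathcal S=\{0,\dots,m_s\}$ with $m_x\le m_y$; $\mathcal W=\{s-x:s\in\mathcal S,x\in\mathcal X\}$; $\mathcal P_S$ the pmfs on $\mathcal S$; $\mathcal Y_\circ(w)=\{y\in\mathcal Y:w+y\in\mathcal S\}$. The demand $X_1,X_2,\dots$ is i.i.d. $\sim P_X$, independent of $S_1$. Given $b(y\mid w)$ with $b(\mathcal Y_\circ(w)\mid w)=1$, the constant-distribution policy $b$ draws $Y_t\sim b(\cdot\mid W_t)$, $W_t=S_t-X_t$, and $S_{t+1}=S_t+Y_t-X_t$. Given $\theta\in\mathcal P_S$ and $\xi(w)=\sum_{(x,s):s-x=w}P_X(x)\theta(s)$, a structured policy with respect to $(\theta,\xi)$ is $b(y\mid w)=P_X(y)\theta(y+w)/\xi(w)$ for $y\in\mathcal X\cap\mathcal Y_\circ(w)$ and $0$ otherwise. The leakage rate of a policy is $L_T=\frac1TI(X^T,S_1;Y^T)$, $L_\infty=\limsup_TL_T$. *)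

theory Defs
  imports "HOL-Analysis.Analysis"
begin

definition Xset :: "nat \<Rightarrow> int set" where "Xset mx = {0..int mx}"
definition Yset :: "nat \<Rightarrow> int set" where "Yset my = {0..int my}"
definition Sset :: "nat \<Rightarrow> int set" where "Sset ms = {0..int ms}"

definition Wset :: "nat \<Rightarrow> nat \<Rightarrow> int set" where
  "Wset mx ms = {s - x | s x. s \<in> Sset ms \<and> x \<in> Xset mx}"

definition Ycirc :: "nat \<Rightarrow> nat \<Rightarrow> int \<Rightarrow> int set" where
  "Ycirc my ms w = {y \<in> Yset my. w + y \<in> Sset ms}"

definition is_pmf_on :: "int set \<Rightarrow> (int \<Rightarrow> real) \<Rightarrow> bool" where
  "is_pmf_on A p \<longleftrightarrow> (\<forall>a. 0 \<le> p a) \<and> (\<forall>a. a \<notin> A \<longrightarrow> p a = 0) \<and> (\<Sum>a\<in>A. p a) = 1"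

definition mutual_info :: "('a \<Rightarrow> 'b \<Rightarrow> real) \<Rightarrow> 'a set \<Rightarrow> 'b set \<Rightarrow> real" where
  "mutual_info p A B =
     (\<Sum>a\<in>A. \<Sum>b\<in>B.
        if p a b > 0
        then p a b * ln (p a b / ((\<Sum>b'\<in>B. p a b') * (\<Sum>a'\<in>A. p a' b)))
        else 0)"

text \<open>\<open>I(S - X; X)\<close> for independent \<open>X \<sim> PX\<close>, \<open>S \<sim> \<theta>\<close>: joint pmf of (W,X) is PX x * \<theta>(w + x).\<close>
definition J_obj :: "nat \<Rightarrow> nat \<Rightarrow> (int \<Rightarrow> real) \<Rightarrow> (int \<Rightarrow> real) \<Rightarrow> real" where
  "J_obj mx ms PX \<theta> = mutual_info (\<lambda>w x. PX x * \<theta> (w + x)) (Wset mx ms) (Xset mx)"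

definition xi_of :: "nat \<Rightarrow> nat \<Rightarrow> (int \<Rightarrow> real) \<Rightarrow> (int \<Rightarrow> real) \<Rightarrow> int \<Rightarrow> real" where
  "xi_of mx ms PX \<theta> w = (\<Sum>(x,s)\<in>{(x,s). x \<in> Xset mx \<and> s \<in> Sset ms \<and> s - x = w}. PX x * \<theta> s)"

text \<open>Structured policy w.r.t. (\<theta>, \<xi>); \<open>b y w\<close> stands for b(y | w).\<close>
definition structured_policy ::
  "nat \<Rightarrow> nat \<Rightarrow> nat \<Rightarrow> (int \<Rightarrow> real) \<Rightarrow> (int \<Rightarrow> real) \<Rightarrow> (int \<Rightarrow> real)
     \<Rightarrow> (int \<Rightarrow> int \<Rightarrow> real) \<Rightarrow> bool" where
  "structured_policy mx my ms PX \<theta> \<xi> b \<longleftrightarrow>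
     (\<forall>w\<in>Wset mx ms. \<forall>y.
        b y w = (if y \<in> Xset mx \<inter> Ycirc my ms w then PX y * \<theta> (y + w) / \<xi> w else 0))"

text \<open>Probability that, starting from stock s, demands xs and decisions ys occur
  under the constant-distribution policy b: \<open>\<prod>_t PX(x_t) b(y_t | s_t - x_t)\<close>,
  with \<open>s_{t+1} = s_t + y_t - x_t\<close>.\<close>
fun traj_prob :: "(int \<Rightarrow> real) \<Rightarrow> (int \<Rightarrow> int \<Rightarrow> real) \<Rightarrow> int \<Rightarrow> int list \<Rightarrow> int list \<Rightarrow> real" where
  "traj_prob PX b s [] [] = 1"
| "traj_prob PX b s (x # xs) (y # ys) = PX x * b y (s - x) * traj_prob PX b (s + y - x) xs ys"
| "traj_prob PX b s _ _ = 0"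

text \<open>\<open>L_T = (1/T) I(X^T, S_1; Y^T)\<close> with \<open>S_1 \<sim> \<theta>1\<close>.\<close>
definition leakage_T ::
  "nat \<Rightarrow> nat \<Rightarrow> nat \<Rightarrow> (int \<Rightarrow> real) \<Rightarrow> (int \<Rightarrow> real) \<Rightarrow> (int \<Rightarrow> int \<Rightarrow> real) \<Rightarrow> nat \<Rightarrow> real" where
  "leakage_T mx my ms PX \<theta>1 b T =
     (1 / real T) * mutual_info
        (\<lambda>(xs, s1) ys. \<theta>1 s1 * traj_prob PX b s1 xs ys)
        {(xs, s1). length xs = T \<and> set xs \<subseteq> Xset mx \<and> s1 \<in> Sset ms}
        {ys. length ys = T \<and> set ys \<subseteq> Yset my}"

definition leakage_rate ::
  "nat \<Rightarrow> nat \<Rightarrow> nat \<Rightarrow> (int \<Rightarrow> real) \<Rightarrow> (int \<Rightarrow> real) \<Rightarrow> (int \<Rightarrow> int \<Rightarrow> real) \<Rightarrow> ereal" where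
  "leakage_rate mx my ms PX \<theta>1 b = limsup (\<lambda>T. ereal (leakage_T mx my ms PX \<theta>1 b T))"

end

theory Submission
  imports Defs
begin



definition LS :: "nat \<Rightarrow> 'a set \<Rightarrow> 'a list set" where
  "LS n A = {xs. length xs = n \<and> set xs \<subseteq> A}"

lemma LS_0[simp]: "LS 0 A = {[]}" by (auto simp: LS_def)

lemma LS_Suc: "LS (Suc n) A = (\<lambda>(a,zs). a#zs) ` (A \<times> LS n A)"
  by (auto simp: LS_def length_Suc_conv image_iff)

lemma finite_LS: "finite A \<Longrightarrow> finite (LS n A)"
  unfolding LS_def using finite_lists_length_eq[of A n] by (simp add: conj_commute)

lemma sum_LS_Suc: "finite A \<Longrightarrow> sum f (LS (Suc n) A) = (\<Sum>a\<in>A. \<Sum>zs\<in>LS n A. f (a#zs))"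
proof -
  have "inj_on (\<lambda>(a,zs). a#zs) (A \<times> LS n A)" by (auto simp: inj_on_def)
  hence "sum f (LS (Suc n) A) = (\<Sum>p\<in>A \<times> LS n A. f ((\<lambda>(a,zs). a#zs) p))"
    unfolding LS_Suc by (rule sum.reindex[unfolded comp_def])
  also have "\<dots> = (\<Sum>a\<in>A. \<Sum>zs\<in>LS n A. f (a#zs))"
    by (simp add: sum.cartesian_product split_def)
  finally show ?thesis .
qed

lemma Wset_eq: "Wset mx ms = {- int mx..int ms}"
proof
  show "Wset mx ms \<subseteq> {- int mx..int ms}" by (auto simp: Wset_def Sset_def Xset_def)
  show "{- int mx..int ms} \<subseteq> Wset mx ms"
  proof
    fix w assume w: "w \<in> {- int mx..int ms}"
    show "w \<in> Wset mx ms"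
    proof (cases "w \<ge> 0")
      case True thus ?thesis using w unfolding Wset_def Sset_def Xset_def
        by (intro CollectI exI[of _ w] exI[of _ 0]) auto
    next
      case False thus ?thesis using w unfolding Wset_def Sset_def Xset_def
        by (intro CollectI exI[of _ 0] exI[of _ "-w"]) auto
    qed
  qed
qed




locale pol =
  fixes mx my ms :: nat and PX th :: "int \<Rightarrow> real"
  assumes mxmy: "mx \<le> my" and PXp: "is_pmf_on (Xset mx) PX" and thp: "is_pmf_on (Sset ms) th"
begin

abbreviation "X \<equiv> Xset mx"
abbreviation "Y \<equiv> Yset my"
abbreviation "S \<equiv> Sset ms"
abbreviation "W \<equiv> Wset mx ms"

definition xi :: "int \<Rightarrow> real" where "xi w = (\<Sum>x\<in>X. PX x * th (w + x))"
definition b :: "int \<Rightarrow> int \<Rightarrow> real" where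
  "b y w = (if y \<in> X \<inter> Ycirc my ms w then PX y * th (y + w) / xi w else 0)"

lemma finX[simp]: "finite X" and finY[simp]: "finite Y" and finS[simp]: "finite S" and finW[simp]: "finite W"
  by (auto simp: Xset_def Yset_def Sset_def Wset_eq)

lemma XY: "X \<subseteq> Y" using mxmy by (auto simp: Xset_def Yset_def)

lemma PX_nn: "0 \<le> PX x" using PXp by (auto simp: is_pmf_on_def)
lemma th_nn: "0 \<le> th s" using thp by (auto simp: is_pmf_on_def)
lemma PX_out: "x \<notin> X \<Longrightarrow> PX x = 0" using PXp by (auto simp: is_pmf_on_def)
lemma th_out: "s \<notin> S \<Longrightarrow> th s = 0" using thp by (auto simp: is_pmf_on_def)
lemma PX_sum: "(\<Sum>x\<in>X. PX x) = 1" using PXp by (auto simp: is_pmf_on_def)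
lemma th_sum: "(\<Sum>s\<in>S. th s) = 1" using thp by (auto simp: is_pmf_on_def)

lemma xi_nn: "0 \<le> xi w" unfolding xi_def by (intro sum_nonneg mult_nonneg_nonneg PX_nn th_nn)

lemma xi_ge: "x \<in> X \<Longrightarrow> PX x * th (w + x) \<le> xi w"
  unfolding xi_def by (rule member_le_sum) (auto intro: mult_nonneg_nonneg PX_nn th_nn)

lemma b_nn: "0 \<le> b y w" unfolding b_def using PX_nn th_nn xi_nn by auto

lemma shiftW: assumes "x \<in> X" shows "(\<Sum>w\<in>W. th (w + x) * g w) = (\<Sum>s\<in>S. th s * g (s - x))"
proof -
  have sub: "(\<lambda>s. s - x) ` S \<subseteq> W" using assms by (auto simp: Wset_def)
  have "(\<Sum>w\<in>W. th (w + x) * g w) = (\<Sum>w\<in>(\<lambda>s. s - x) ` S. th (w + x) * g w)"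
  proof (rule sum.mono_neutral_right)
    show "\<forall>w\<in>W - (\<lambda>s. s - x) ` S. th (w + x) * g w = 0"
    proof
      fix w assume "w \<in> W - (\<lambda>s. s - x) ` S"
      hence "w + x \<notin> S" by (metis DiffD2 add_diff_cancel_right' image_eqI)
      thus "th (w + x) * g w = 0" by (simp add: th_out)
    qed
  qed (use sub in auto)
  also have "\<dots> = (\<Sum>s\<in>S. th s * g (s - x))"
    by (subst sum.reindex) (auto simp: inj_on_def)
  finally show ?thesis .
qed

lemma b_xi: "b y w * xi w = (if y \<in> X then PX y * th (w + y) else 0)"
proof (cases "y \<in> X")
  case yX: True
  show ?thesis
  proof (cases "w + y \<in> S")
    case True
    hence yc: "y \<in> X \<inter> Ycirc my ms w" using yX XY by (auto simp: Ycirc_def)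
    show ?thesis
    proof (cases "xi w = 0")
      case True
      with xi_ge[OF yX, of w] have "PX y * th (w + y) = 0"
        using PX_nn th_nn by (metis antisym mult_nonneg_nonneg)
      thus ?thesis using True yX by (simp add: b_def)
    qed (use yc yX in \<open>simp add: b_def add.commute\<close>)
  next
    case False thus ?thesis by (auto simp: b_def Ycirc_def th_out add.commute)
  qed
qed (simp add: b_def)

lemma K: "(\<Sum>s\<in>S. th s * (\<Sum>x\<in>X. PX x * b y (s - x) * k (s - x)))
        = (if y \<in> X then PX y * (\<Sum>s\<in>S. th s * k (s - y)) else 0)"
proof -
  have "(\<Sum>s\<in>S. th s * (\<Sum>x\<in>X. PX x * b y (s - x) * k (s - x)))
      = (\<Sum>s\<in>S. \<Sum>x\<in>X. PX x * (th s * (b y (s - x) * k (s - x))))"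
    unfolding sum_distrib_left by (intro sum.cong refl) (simp only: mult_ac)
  also have "\<dots> = (\<Sum>x\<in>X. \<Sum>s\<in>S. PX x * (th s * (b y (s - x) * k (s - x))))"
    by (rule sum.swap)
  also have "\<dots> = (\<Sum>x\<in>X. PX x * (\<Sum>s\<in>S. th s * (b y (s - x) * k (s - x))))"
    by (simp only: sum_distrib_left)
  also have "\<dots> = (\<Sum>x\<in>X. PX x * (\<Sum>w\<in>W. th (w + x) * (b y w * k w)))"
    by (intro sum.cong refl arg_cong2[where f="(*)"] shiftW[symmetric])
  also have "\<dots> = (\<Sum>x\<in>X. \<Sum>w\<in>W. b y w * k w * (PX x * th (w + x)))"
    unfolding sum_distrib_left by (intro sum.cong refl) (simp only: mult_ac)
  also have "\<dots> = (\<Sum>w\<in>W. \<Sum>x\<in>X. b y w * k w * (PX x * th (w + x)))"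
    by (rule sum.swap)
  also have "\<dots> = (\<Sum>w\<in>W. b y w * k w * xi w)"
    by (simp only: xi_def sum_distrib_left)
  also have "\<dots> = (\<Sum>w\<in>W. (if y \<in> X then PX y * th (w + y) else 0) * k w)"
    by (intro sum.cong refl) (subst b_xi[symmetric], simp only: mult_ac)
  also have "\<dots> = (if y \<in> X then PX y * (\<Sum>s\<in>S. th s * k (s - y)) else 0)"
  proof (cases "y \<in> X")
    case True
    have "(\<Sum>w\<in>W. PX y * th (w + y) * k w) = PX y * (\<Sum>w\<in>W. th (w + y) * k w)"
      by (simp only: sum_distrib_left mult.assoc)
    thus ?thesis using True shiftW[OF True, of k] by simp
  qed simp
  finally show ?thesis .
qed

lemma b_sum: assumes "x \<in> X" "th s * PX x \<noteq> 0" shows "(\<Sum>y\<in>Y. b y (s - x)) = 1"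
proof -
  have pos: "xi (s - x) > 0" using xi_ge[OF assms(1), of "s - x"] assms(2) PX_nn th_nn
    by (smt (verit) mult_nonneg_nonneg mult.commute diff_add_cancel)
  have "(\<Sum>y\<in>Y. b y (s - x)) = (\<Sum>y\<in>Y. b y (s - x) * xi (s - x)) / xi (s - x)"
    using pos by (simp add: sum_divide_distrib)
  also have "\<dots> = (\<Sum>y\<in>Y. if y \<in> X then PX y * th (s - x + y) else 0) / xi (s - x)"
    by (simp only: b_xi)
  also have "\<dots> = xi (s - x) / xi (s - x)"
    using XY by (simp add: sum.If_cases Int_absorb1 xi_def)
  finally show ?thesis using pos by simp
qed

end



fun cost :: "(int \<Rightarrow> int \<Rightarrow> real) \<Rightarrow> int \<Rightarrow> int list \<Rightarrow> int list \<Rightarrow> real" where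
  "cost f s (x # xs) (y # ys) = f (s - x) y + cost f (s + y - x) xs ys"
| "cost f s _ _ = 0"

fun Rp :: "(int \<Rightarrow> int \<Rightarrow> real) \<Rightarrow> int \<Rightarrow> int list \<Rightarrow> int list \<Rightarrow> real" where
  "Rp r s [] [] = 1"
| "Rp r s (x # xs) (y # ys) = r (s - x) y * Rp r (s + y - x) xs ys"
| "Rp r s _ _ = 0"

context pol begin

lemma b_fact: "b y w = th (y + w) * (if y \<in> X \<inter> Ycirc my ms w then PX y / xi w else 0)"
  by (simp add: b_def)

lemma sum_prod: "(\<Sum>xs\<in>LS n X. prod_list (map PX xs)) = 1"
proof (induction n)
  case (Suc n)
  have "(\<Sum>xs\<in>LS (Suc n) X. prod_list (map PX xs)) = (\<Sum>a\<in>X. PX a * (\<Sum>zs\<in>LS n X. prod_list (map PX zs)))"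
    by (simp add: sum_LS_Suc sum_distrib_left)
  thus ?case using Suc PX_sum by simp
qed simp

lemma trajA: "length xs = n \<Longrightarrow>
  th s * (\<Sum>ys\<in>LS n Y. traj_prob PX b s xs ys) = th s * prod_list (map PX xs)"
proof (induction xs arbitrary: s n)
  case Nil thus ?case by simp
next
  case (Cons x xs)
  then obtain m where n: "n = Suc m" and m: "length xs = m" by auto
  have IH: "b y (s - x) * (\<Sum>ys\<in>LS m Y. traj_prob PX b (s + y - x) xs ys) = b y (s - x) * prod_list (map PX xs)" for y
  proof -
    have "th (s + y - x) * (\<Sum>ys\<in>LS m Y. traj_prob PX b (s + y - x) xs ys) = th (s + y - x) * prod_list (map PX xs)"
      using Cons.IH[OF m] .
    hence "(if y \<in> X \<inter> Ycirc my ms (s - x) then PX y / xi (s - x) else 0) * (th (s + y - x) * (\<Sum>ys\<in>LS m Y. traj_prob PX b (s + y - x) xs ys))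
      = (if y \<in> X \<inter> Ycirc my ms (s - x) then PX y / xi (s - x) else 0) * (th (s + y - x) * prod_list (map PX xs))"
      by (rule arg_cong)
    moreover have "y + (s - x) = s + y - x" by simp
    ultimately show ?thesis unfolding b_fact by (simp only: mult_ac)
  qed
  have "th s * (\<Sum>ys\<in>LS n Y. traj_prob PX b s (x # xs) ys)
      = th s * (\<Sum>y\<in>Y. PX x * (b y (s - x) * (\<Sum>ys\<in>LS m Y. traj_prob PX b (s + y - x) xs ys)))"
    unfolding n by (simp add: sum_LS_Suc sum_distrib_left mult.assoc)
  also have "\<dots> = th s * PX x * (\<Sum>y\<in>Y. b y (s - x)) * prod_list (map PX xs)"
  proof -
    have "(\<Sum>y\<in>Y. PX x * (b y (s - x) * prod_list (map PX xs))) = PX x * (\<Sum>y\<in>Y. b y (s - x)) * prod_list (map PX xs)"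
      by (simp add: sum_distrib_left sum_distrib_right mult.assoc)
    thus ?thesis by (simp only: IH mult.assoc)
  qed
  also have "\<dots> = th s * PX x * prod_list (map PX xs)"
  proof (cases "x \<in> X \<and> th s * PX x \<noteq> 0")
    case True thus ?thesis using b_sum[of x s] by simp
  next
    case False thus ?thesis using PX_out by auto
  qed
  finally show ?case by simp
qed

lemma trajT: "th s * (\<Sum>xs\<in>LS n X. \<Sum>ys\<in>LS n Y. traj_prob PX b s xs ys) = th s"
proof -
  have "th s * (\<Sum>xs\<in>LS n X. \<Sum>ys\<in>LS n Y. traj_prob PX b s xs ys)
      = (\<Sum>xs\<in>LS n X. th s * (\<Sum>ys\<in>LS n Y. traj_prob PX b s xs ys))"
    by (simp add: sum_distrib_left)
  also have "\<dots> = (\<Sum>xs\<in>LS n X. th s * prod_list (map PX xs))"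
    by (intro sum.cong refl trajA) (auto simp: LS_def)
  also have "\<dots> = th s" by (simp add: sum_distrib_left[symmetric] sum_prod)
  finally show ?thesis .
qed

lemma trajB: "length ys = n \<Longrightarrow>
  (\<Sum>s\<in>S. th s * (\<Sum>xs\<in>LS n X. traj_prob PX b s xs ys)) = prod_list (map PX ys)"
proof (induction ys arbitrary: n)
  case Nil thus ?case by (simp add: th_sum)
next
  case (Cons y ys)
  then obtain m where n: "n = Suc m" and m: "length ys = m" by auto
  define h where "h w = (\<Sum>xs\<in>LS m X. traj_prob PX b (w + y) xs ys)" for w
  have "(\<Sum>s\<in>S. th s * (\<Sum>xs\<in>LS n X. traj_prob PX b s xs (y # ys)))
      = (\<Sum>s\<in>S. th s * (\<Sum>x\<in>X. PX x * b y (s - x) * h (s - x)))"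
    unfolding n h_def by (simp add: sum_LS_Suc sum_distrib_left mult.assoc add.commute add_diff_eq)
  also have "\<dots> = (if y \<in> X then PX y * (\<Sum>s\<in>S. th s * h (s - y)) else 0)"
    by (rule K)
  also have "\<dots> = PX y * prod_list (map PX ys)"
    using Cons.IH[OF m] PX_out by (simp add: h_def)
  finally show ?case by simp
qed

end


context pol begin
lemma trajC: "(\<Sum>s\<in>S. th s * (\<Sum>xs\<in>LS n X. \<Sum>ys\<in>LS n Y. traj_prob PX b s xs ys * cost f s xs ys))
   = real n * (\<Sum>y\<in>X. PX y * (\<Sum>s\<in>S. th s * f (s - y) y))"
proof (induction n)
  case 0 thus ?case by simp
next
  case (Suc n)
  define c where "c = (\<Sum>y\<in>X. PX y * (\<Sum>s\<in>S. th s * f (s - y) y))"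
  define T where "T s' = (\<Sum>xs\<in>LS n X. \<Sum>ys\<in>LS n Y. traj_prob PX b s' xs ys)" for s'
  define U where "U s' = (\<Sum>xs\<in>LS n X. \<Sum>ys\<in>LS n Y. traj_prob PX b s' xs ys * cost f s' xs ys)" for s'
  define G where "G y w = f w y * T (w + y) + U (w + y)" for y w
  have e1: "(\<Sum>xs\<in>LS n X. \<Sum>y\<in>Y. \<Sum>ys\<in>LS n Y. PX x * b y (s - x) * traj_prob PX b (s + y - x) xs ys
              * (f (s - x) y + cost f (s + y - x) xs ys))
          = (\<Sum>y\<in>Y. PX x * b y (s - x) * G y (s - x))" for s x
  proof -
    have "(\<Sum>xs\<in>LS n X. \<Sum>y\<in>Y. \<Sum>ys\<in>LS n Y. PX x * b y (s - x) * traj_prob PX b (s + y - x) xs ys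
              * (f (s - x) y + cost f (s + y - x) xs ys))
      = (\<Sum>y\<in>Y. \<Sum>xs\<in>LS n X. \<Sum>ys\<in>LS n Y. PX x * b y (s - x) * traj_prob PX b (s + y - x) xs ys
              * (f (s - x) y + cost f (s + y - x) xs ys))"
      by (rule sum.swap)
    also have "\<dots> = (\<Sum>y\<in>Y. PX x * b y (s - x) * G y (s - x))"
    proof (intro sum.cong refl)
      fix y
      have eq: "s - x + y = s + y - x" by simp
      define P where "P = PX x * b y (s - x)"
      define F where "F = f (s - x) y"
      have "(\<Sum>xs\<in>LS n X. \<Sum>ys\<in>LS n Y. P * traj_prob PX b (s + y - x) xs ys
              * (F + cost f (s + y - x) xs ys))
          = (\<Sum>xs\<in>LS n X. \<Sum>ys\<in>LS n Y. (P * F) * traj_prob PX b (s + y - x) xs ys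
              + P * (traj_prob PX b (s + y - x) xs ys * cost f (s + y - x) xs ys))"
        by (intro sum.cong refl) (simp add: algebra_simps)
      also have "\<dots> = P * F * T (s + y - x) + P * U (s + y - x)"
        unfolding T_def U_def by (simp add: sum.distrib sum_distrib_left)
      also have "\<dots> = P * G y (s - x)" unfolding G_def eq F_def by (simp add: algebra_simps)
      finally show "(\<Sum>xs\<in>LS n X. \<Sum>ys\<in>LS n Y. PX x * b y (s - x) * traj_prob PX b (s + y - x) xs ys
              * (f (s - x) y + cost f (s + y - x) xs ys)) = PX x * b y (s - x) * G y (s - x)"
        unfolding P_def F_def .
    qed
    finally show ?thesis .
  qed
  have "(\<Sum>s\<in>S. th s * (\<Sum>xs\<in>LS (Suc n) X. \<Sum>ys\<in>LS (Suc n) Y. traj_prob PX b s xs ys * cost f s xs ys))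
      = (\<Sum>s\<in>S. th s * (\<Sum>x\<in>X. \<Sum>xs\<in>LS n X. \<Sum>y\<in>Y. \<Sum>ys\<in>LS n Y. PX x * b y (s - x) * traj_prob PX b (s + y - x) xs ys
              * (f (s - x) y + cost f (s + y - x) xs ys)))"
    by (simp add: sum_LS_Suc)
  also have "\<dots> = (\<Sum>s\<in>S. th s * (\<Sum>x\<in>X. \<Sum>y\<in>Y. PX x * b y (s - x) * G y (s - x)))"
    by (simp only: e1)
  also have "\<dots> = (\<Sum>y\<in>Y. \<Sum>s\<in>S. th s * (\<Sum>x\<in>X. PX x * b y (s - x) * G y (s - x)))"
  proof -
    have "th s * (\<Sum>x\<in>X. \<Sum>y\<in>Y. PX x * b y (s - x) * G y (s - x))
        = (\<Sum>y\<in>Y. th s * (\<Sum>x\<in>X. PX x * b y (s - x) * G y (s - x)))" for s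
      by (simp add: sum.swap[of _ X Y] sum_distrib_left)
    thus ?thesis by (simp only: sum.swap[of _ S Y])
  qed
  also have "\<dots> = (\<Sum>y\<in>Y. if y \<in> X then PX y * (\<Sum>s\<in>S. th s * G y (s - y)) else 0)"
    by (simp only: K)
  also have "\<dots> = (\<Sum>y\<in>X. PX y * (\<Sum>s\<in>S. th s * G y (s - y)))"
    using XY by (simp add: sum.If_cases Int_absorb1)
  also have "\<dots> = (\<Sum>y\<in>X. PX y * ((\<Sum>s\<in>S. th s * f (s - y) y) + real n * c))"
  proof (intro sum.cong refl)
    fix y
    have "(\<Sum>s\<in>S. th s * G y (s - y)) = (\<Sum>s\<in>S. f (s - y) y * (th s * T s) + th s * U s)"
      by (simp add: G_def algebra_simps)
    also have "\<dots> = (\<Sum>s\<in>S. th s * f (s - y) y) + (\<Sum>s\<in>S. th s * U s)"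
      by (simp add: T_def trajT sum.distrib mult.commute)
    also have "\<dots> = (\<Sum>s\<in>S. th s * f (s - y) y) + real n * c"
      using Suc.IH by (simp add: U_def c_def)
    finally show "PX y * (\<Sum>s\<in>S. th s * G y (s - y)) = PX y * ((\<Sum>s\<in>S. th s * f (s - y) y) + real n * c)"
      by simp
  qed
  also have "\<dots> = c + real n * c"
    by (simp add: distrib_left sum.distrib sum_distrib_right[symmetric] PX_sum c_def)
  finally show ?case by (simp add: c_def algebra_simps)
qed

end



context pol begin

definition rr :: "int \<Rightarrow> int \<Rightarrow> real" where
  "rr w y = (if y \<in> X \<inter> Ycirc my ms w then th (y + w) / xi w else 0)"

lemma b_rr: "b y w = PX y * rr w y" by (simp add: b_def rr_def)

lemma rr_nn: "0 \<le> rr w y" using th_nn xi_nn by (simp add: rr_def)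

lemma trajD: "traj_prob PX b s xs ys = prod_list (map PX xs) * prod_list (map PX ys) * Rp rr s xs ys"
proof (induction xs arbitrary: s ys)
  case Nil thus ?case by (cases ys) simp_all
next
  case (Cons x xs) thus ?case by (cases ys) (simp_all add: b_rr mult_ac)
qed

lemma Rp_nn: "0 \<le> Rp rr s xs ys"
  by (induction rr s xs ys rule: Rp.induct) (simp_all add: rr_nn)

lemma traj_nn: "0 \<le> traj_prob PX b s xs ys"
  unfolding trajD using Rp_nn PX_nn
  by (intro mult_nonneg_nonneg prod_list_nonneg) auto

lemma lnR: "Rp rr s xs ys > 0 \<Longrightarrow> ln (Rp rr s xs ys) = cost (\<lambda>w y. ln (rr w y)) s xs ys"
proof (induction xs arbitrary: s ys)
  case Nil thus ?case by (cases ys) simp_all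
next
  case (Cons x xs)
  then obtain y ys' where ys: "ys = y # ys'" by (cases ys) auto
  have a: "rr (s - x) y > 0" and c: "Rp rr (s + y - x) xs ys' > 0"
    using Cons.prems rr_nn[of "s - x" y] Rp_nn[of "s + y - x" xs ys'] unfolding ys
    by (auto simp: zero_less_mult_iff)
  show ?case using Cons.IH[OF c] a c unfolding ys by (simp add: ln_mult)
qed

definition cc :: real where
  "cc = (\<Sum>y\<in>X. PX y * (\<Sum>s\<in>S. th s * ln (rr (s - y) y)))"

lemma MI: "mutual_info (\<lambda>(xs, s1) ys. th s1 * traj_prob PX b s1 xs ys)
        {(xs, s1). length xs = n \<and> set xs \<subseteq> X \<and> s1 \<in> S}
        {ys. length ys = n \<and> set ys \<subseteq> Y} = real n * cc"
proof -
  define p where "p = (\<lambda>(xs, s1) ys. th s1 * traj_prob PX b s1 xs ys)"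
  define f where "f = (\<lambda>w y. ln (rr w y))"
  have A: "{(xs, s1). length xs = n \<and> set xs \<subseteq> X \<and> s1 \<in> S} = LS n X \<times> S"
    by (auto simp: LS_def)
  have B: "{ys. length ys = n \<and> set ys \<subseteq> Y} = LS n Y" by (simp add: LS_def)
  have row: "(\<Sum>b'\<in>LS n Y. p a b') = th (snd a) * prod_list (map PX (fst a))" if "a \<in> LS n X \<times> S" for a
    using that trajA[of "fst a" n "snd a"] by (auto simp: p_def LS_def sum_distrib_left split: prod.splits)
  have col: "(\<Sum>a'\<in>LS n X \<times> S. p a' ys) = prod_list (map PX ys)" if "ys \<in> LS n Y" for ys
  proof -
    have "(\<Sum>a'\<in>LS n X \<times> S. p a' ys) = (\<Sum>xs\<in>LS n X. \<Sum>s\<in>S. th s * traj_prob PX b s xs ys)"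
      by (simp add: sum.cartesian_product split_def p_def)
    also have "\<dots> = (\<Sum>s\<in>S. th s * (\<Sum>xs\<in>LS n X. traj_prob PX b s xs ys))"
      by (subst sum.swap) (simp add: sum_distrib_left)
    also have "\<dots> = prod_list (map PX ys)"
    proof -
      have len: "length ys = n" using that by (simp add: LS_def)
      show ?thesis using trajB[OF len] .
    qed
    finally show ?thesis .
  qed
  have trm: "(if p a ys > 0 then p a ys * ln (p a ys / ((\<Sum>b'\<in>LS n Y. p a b') * (\<Sum>a'\<in>LS n X \<times> S. p a' ys))) else 0)
      = p a ys * cost f (snd a) (fst a) ys" if a: "a \<in> LS n X \<times> S" and ys: "ys \<in> LS n Y" for a ys
  proof -
    obtain xs s1 where a_eq: "a = (xs, s1)" by (cases a)
    define pA where "pA = th s1 * prod_list (map PX xs)"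
    define pB where "pB = prod_list (map PX ys)"
    have p_eq: "p a ys = pA * pB * Rp rr s1 xs ys"
      by (simp add: p_def a_eq pA_def pB_def trajD mult_ac)
    have p_nn: "0 \<le> p a ys" using th_nn traj_nn by (simp add: p_def a_eq)
    show ?thesis
    proof (cases "p a ys > 0")
      case True
      have nz: "pA * pB \<noteq> 0" using True p_eq by auto
      have R: "Rp rr s1 xs ys > 0" using True p_eq nz Rp_nn[of s1 xs ys]
        by (metis less_eq_real_def mult_zero_right)
      have d: "(\<Sum>b'\<in>LS n Y. p a b') * (\<Sum>a'\<in>LS n X \<times> S. p a' ys) = pA * pB"
        using row[OF a] col[OF ys] by (simp add: a_eq pA_def pB_def)
      have "p a ys / ((\<Sum>b'\<in>LS n Y. p a b') * (\<Sum>a'\<in>LS n X \<times> S. p a' ys)) = Rp rr s1 xs ys"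
        unfolding d p_eq using nz by simp
      thus ?thesis using True lnR[OF R] by (simp add: a_eq f_def)
    next
      case False
      hence "p a ys = 0" using p_nn by simp
      thus ?thesis by simp
    qed
  qed
  have "mutual_info p (LS n X \<times> S) (LS n Y) = (\<Sum>a\<in>LS n X \<times> S. \<Sum>ys\<in>LS n Y. p a ys * cost f (snd a) (fst a) ys)"
    unfolding mutual_info_def by (intro sum.cong refl trm)
  also have "\<dots> = (\<Sum>xs\<in>LS n X. \<Sum>s\<in>S. th s * (\<Sum>ys\<in>LS n Y. traj_prob PX b s xs ys * cost f s xs ys))"
  proof -
    have cp: "(\<Sum>a\<in>LS n X \<times> S. G a) = (\<Sum>xs\<in>LS n X. \<Sum>s\<in>S. G (xs, s))" for G :: "int list \<times> int \<Rightarrow> real"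
      by (simp add: sum.cartesian_product split_def)
    show ?thesis unfolding cp by (simp add: p_def sum_distrib_left mult.assoc)
  qed
  also have "\<dots> = (\<Sum>s\<in>S. th s * (\<Sum>xs\<in>LS n X. \<Sum>ys\<in>LS n Y. traj_prob PX b s xs ys * cost f s xs ys))"
    by (subst sum.swap) (simp add: sum_distrib_left)
  also have "\<dots> = real n * cc" unfolding trajC cc_def f_def ..
  finally show ?thesis unfolding p_def A B .
qed

lemma Jval: "J_obj mx ms PX th = cc"
proof -
  define q where "q = (\<lambda>w x. PX x * th (w + x))"
  have r1: "(\<Sum>x'\<in>X. q w x') = xi w" for w by (simp add: q_def xi_def)
  have r2: "(\<Sum>w'\<in>W. q w' x) = PX x" if "x \<in> X" for x
    using shiftW[OF that, of "\<lambda>_. 1"] th_sum by (simp add: q_def sum_distrib_left[symmetric] mult.commute)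
  have trm: "(if q w x > 0 then q w x * ln (q w x / ((\<Sum>x'\<in>X. q w x') * (\<Sum>w'\<in>W. q w' x))) else 0)
      = PX x * (th (w + x) * ln (rr w x))" if x: "x \<in> X" for w x
  proof (cases "q w x > 0")
    case True
    have pos: "PX x > 0" "th (w + x) > 0"
      using True PX_nn[of x] th_nn[of "w + x"] by (auto simp: q_def zero_less_mult_iff)
    hence "w + x \<in> S" using th_out by force
    hence inc: "x \<in> X \<inter> Ycirc my ms w" using x XY by (auto simp: Ycirc_def add.commute)
    have xip: "xi w > 0" using xi_ge[OF x, of w] True by (simp add: q_def)
    have "q w x / (xi w * PX x) = rr w x"
      using pos xip inc by (simp add: q_def rr_def add.commute)
    thus ?thesis using True r1 r2[OF x] by (simp add: q_def mult.assoc)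
  next
    case False
    moreover have "0 \<le> q w x" by (simp add: q_def PX_nn th_nn)
    ultimately have "q w x = 0" by linarith
    hence "PX x * th (w + x) = 0" by (simp add: q_def)
    thus ?thesis using False by (auto simp: mult.assoc[symmetric])
  qed
  have "J_obj mx ms PX th = (\<Sum>w\<in>W. \<Sum>x\<in>X. PX x * (th (w + x) * ln (rr w x)))"
    unfolding J_obj_def mutual_info_def q_def[symmetric] by (intro sum.cong refl trm)
  also have "\<dots> = (\<Sum>x\<in>X. PX x * (\<Sum>w\<in>W. th (w + x) * ln (rr w x)))"
    by (subst sum.swap) (simp add: sum_distrib_left)
  also have "\<dots> = cc" unfolding cc_def by (intro sum.cong refl) (simp add: shiftW)
  finally show ?thesis .
qed

end



theorem proposition3:
  fixes mx my ms :: nat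
    and PX \<theta>s \<xi>s :: "int \<Rightarrow> real"
    and bs :: "int \<Rightarrow> int \<Rightarrow> real"
    and Js :: real
  assumes "mx \<le> my"
    and "is_pmf_on (Xset mx) PX"
    and "is_pmf_on (Sset ms) \<theta>s"
    and "\<forall>\<theta>. is_pmf_on (Sset ms) \<theta> \<longrightarrow> J_obj mx ms PX \<theta>s \<le> J_obj mx ms PX \<theta>"
    and "Js = J_obj mx ms PX \<theta>s"
    and "\<xi>s = (\<lambda>w. \<Sum>(x,s)\<in>{(x,s). x \<in> Xset mx \<and> s \<in> Sset ms \<and> s - x = w}. PX x * \<theta>s s)"
    and "bs = (\<lambda>y w. if y \<in> Xset mx \<inter> Ycirc my ms w then PX y * \<theta>s (y + w) / \<xi>s w else 0)"
  shows "(\<forall>w. \<xi>s w = xi_of mx ms PX \<theta>s w)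
       \<and> structured_policy mx my ms PX \<theta>s \<xi>s bs
       \<and> leakage_rate mx my ms PX \<theta>s bs = ereal Js"
proof -
  interpret P: pol mx my ms PX \<theta>s using assms(1-3) by unfold_locales
  have xi_eq: "\<xi>s = P.xi"
  proof (rule ext)
    fix w
    have set_eq: "{(x,s). x \<in> Xset mx \<and> s \<in> Sset ms \<and> s - x = w} = (\<lambda>x. (x, w + x)) ` {x\<in>Xset mx. w + x \<in> Sset ms}"
      by auto
    have "\<xi>s w = (\<Sum>x\<in>{x\<in>Xset mx. w + x \<in> Sset ms}. PX x * \<theta>s (w + x))"
      unfolding assms(6) set_eq by (subst sum.reindex) (auto simp: inj_on_def)
    also have "\<dots> = (\<Sum>x\<in>Xset mx. PX x * \<theta>s (w + x))"
      by (rule sum.mono_neutral_left) (auto simp: P.th_out)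
    finally show "\<xi>s w = P.xi w" by (simp add: P.xi_def)
  qed
  have p1: "\<forall>w. \<xi>s w = xi_of mx ms PX \<theta>s w" by (simp add: xi_of_def assms(6))
  have p2: "structured_policy mx my ms PX \<theta>s \<xi>s bs" by (simp add: structured_policy_def assms(7))
  have b_eq: "bs = P.b" by (intro ext) (simp add: assms(7) P.b_def xi_eq)
  have LT: "leakage_T mx my ms PX \<theta>s bs T = Js" if "T \<ge> 1" for T
  proof -
    have "leakage_T mx my ms PX \<theta>s bs T = (1 / real T) * (real T * P.cc)"
      unfolding leakage_T_def b_eq P.MI ..
    also have "\<dots> = P.cc" using that by simp
    finally show ?thesis using assms(5) P.Jval by simp
  qed
  have "eventually (\<lambda>T. ereal (leakage_T mx my ms PX \<theta>s bs T) = ereal Js) sequentially"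
    using LT by (intro eventually_sequentiallyI[of 1]) simp
  hence "(\<lambda>T. ereal (leakage_T mx my ms PX \<theta>s bs T)) \<longlonglongrightarrow> ereal Js"
    by (rule tendsto_eventually)
  hence p3: "leakage_rate mx my ms PX \<theta>s bs = ereal Js"
    unfolding leakage_rate_def by (intro lim_imp_Limsup) simp_all
  show ?thesis using p1 p2 p3 by blast
qed



end
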